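(* Let $\mathfrak{k}$ be a field, $n\ge 2$, and ${\mathcal A}=(x_{i_1\ldots i_n})_{1\le i_j\le r_j}$ a box-shaped matrix of distinct indeterminates with polynomial ring $\mathfrak{k}[{\mathcal A}]$. Let $F\in\mathfrak{k}[{\mathcal A}]$. If for some entry $x_{i_1\ldots i_n}$ of ${\mathcal A}$ there is a positive integer $\lambda$ with $x_{i_1\ldots i_n}^\lambda F\in I_2({\mathcal A})$, then for every entry $x_{j_1\ldots j_n}$ of ${\mathcal A}$ there is a non-negative integer $\nu$ with $x_{j_1\ldots j_n}^\nu F\in I_2({\mathcal A})$.
   Context: $\mathfrak{k}$ is algebraically closed of characteristic $0$. The $2\times2$ minors of a box-shaped matrix $(a_{i_1\ldots i_n})$ are $a_{i_1\ldots i_l\ldots i_n}a_{j_1\ldots j_l\ldots j_n}-a_{i_1\ldots i_{l-1}j_li_{l+1}\ldots i_n}a_{j_1\ldots j_{l-1}i_lj_{l+1}\ldots j_n}$ for any coordinate $l$ and any two index points; $I_2({\mathcal A})$ is the ideal they generate. *)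

theory Defs
  imports "HOL-Library.Poly_Mapping"
begin

text \<open>Polynomials in indeterminates indexed by index tuples (lists of naturals),
  with coefficients in a field: monomials are finitely supported exponent maps.\<close>

type_synonym 'k mpoly = "(nat list \<Rightarrow>\<^sub>0 nat) \<Rightarrow>\<^sub>0 'k"

definition Var :: "nat list \<Rightarrow> 'k::comm_ring_1 mpoly" where
  "Var i = Poly_Mapping.single (Poly_Mapping.single i 1) 1"

definition box :: "nat list \<Rightarrow> nat list set" where
  "box r = {i. length i = length r \<and> (\<forall>j<length r. 1 \<le> i ! j \<and> i ! j \<le> r ! j)}"

definition poly_ring :: "nat list \<Rightarrow> 'k::comm_ring_1 mpoly set" where
  "poly_ring r = {F :: 'k mpoly. \<forall>m \<in> Poly_Mapping.keys F. Poly_Mapping.keys m \<subseteq> box r}"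

definition ideal_gen :: "nat list \<Rightarrow> 'k::comm_ring_1 mpoly set \<Rightarrow> 'k mpoly set" where
  "ideal_gen r G = {(\<Sum>g\<in>t. c g * g) | t c. finite t \<and> t \<subseteq> G \<and> (\<forall>g\<in>t. c g \<in> poly_ring r)}"

definition minors2 :: "nat list \<Rightarrow> 'k::comm_ring_1 mpoly set" where
  "minors2 r = {Var i * Var j - Var (i[l := j ! l]) * Var (j[l := i ! l]) | i j l.
                 i \<in> box r \<and> j \<in> box r \<and> l < length r}"

definition I2 :: "nat list \<Rightarrow> 'k::comm_ring_1 mpoly set" where
  "I2 r = ideal_gen r (minors2 r)"

end

theory Submission
  imports Defs "HOL-Library.Function_Algebras"
begin

abbreviation X :: "(nat list \<Rightarrow>\<^sub>0 nat) \<Rightarrow> 'k::comm_ring_1 mpoly" where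
  "X m \<equiv> Poly_Mapping.single m 1"

lemma poly_ring_add: "p \<in> poly_ring r \<Longrightarrow> q \<in> poly_ring r \<Longrightarrow> p + q \<in> poly_ring r"
  unfolding poly_ring_def using keys_add[of p q] by blast

lemma keys_nat_add: "Poly_Mapping.keys (a + b :: nat list \<Rightarrow>\<^sub>0 nat) \<subseteq> Poly_Mapping.keys a \<union> Poly_Mapping.keys b"
  by (rule keys_add)

lemma poly_ring_mult: "p \<in> poly_ring r \<Longrightarrow> q \<in> poly_ring r \<Longrightarrow> p * q \<in> poly_ring r"
  unfolding poly_ring_def mem_Collect_eq
proof (intro ballI)
  fix m assume p: "\<forall>m\<in>Poly_Mapping.keys p. Poly_Mapping.keys m \<subseteq> box r"
    and q: "\<forall>m\<in>Poly_Mapping.keys q. Poly_Mapping.keys m \<subseteq> box r"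
    and m: "m \<in> Poly_Mapping.keys (p * q)"
  then obtain a b where "m = a + b" "a \<in> Poly_Mapping.keys p" "b \<in> Poly_Mapping.keys q"
    using keys_mult[of p q] by blast
  then show "Poly_Mapping.keys m \<subseteq> box r" using p q keys_nat_add[of a b] by blast
qed

lemma poly_ring_const: "Poly_Mapping.single 0 c \<in> poly_ring r"
  unfolding poly_ring_def by auto

lemma poly_ring_zero: "0 \<in> poly_ring r"
  unfolding poly_ring_def by auto

lemma poly_ring_one: "1 \<in> poly_ring r"
  unfolding poly_ring_def by auto

lemma poly_ring_uminus: "p \<in> poly_ring r \<Longrightarrow> - p \<in> poly_ring r"
  unfolding poly_ring_def by simp

lemma poly_ring_X: "Poly_Mapping.keys m \<subseteq> box r \<Longrightarrow> (X m :: 'k::comm_ring_1 mpoly) \<in> poly_ring r"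
  unfolding poly_ring_def by simp

lemma ideal_genI:
  "finite t \<Longrightarrow> t \<subseteq> G \<Longrightarrow> \<forall>g\<in>t. c g \<in> poly_ring r \<Longrightarrow> a = (\<Sum>g\<in>t. c g * g) \<Longrightarrow> a \<in> ideal_gen r G"
  unfolding ideal_gen_def by blast

lemma ideal_zero: "0 \<in> ideal_gen r G"
  unfolding ideal_gen_def by (rule CollectI, rule exI[of _ "{}"]) auto

lemma ideal_add:
  assumes "a \<in> ideal_gen r G" "b \<in> ideal_gen r G"
  shows "a + b \<in> ideal_gen r G"
proof -
  obtain t1 c1 where 1: "a = (\<Sum>g\<in>t1. c1 g * g)" "finite t1" "t1 \<subseteq> G" "\<forall>g\<in>t1. c1 g \<in> poly_ring r"
    using assms(1) unfolding ideal_gen_def by blast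
  obtain t2 c2 where 2: "b = (\<Sum>g\<in>t2. c2 g * g)" "finite t2" "t2 \<subseteq> G" "\<forall>g\<in>t2. c2 g \<in> poly_ring r"
    using assms(2) unfolding ideal_gen_def by blast
  define c where "c g = (if g \<in> t1 then c1 g else 0) + (if g \<in> t2 then c2 g else 0)" for g
  have fin: "finite (t1 \<union> t2)" using 1 2 by simp
  have "(\<Sum>g\<in>t1 \<union> t2. c g * g) = (\<Sum>g\<in>t1 \<union> t2. (if g \<in> t1 then c1 g * g else 0))
      + (\<Sum>g\<in>t1 \<union> t2. (if g \<in> t2 then c2 g * g else 0))"
  proof -
    have "c g * g = (if g \<in> t1 then c1 g * g else 0) + (if g \<in> t2 then c2 g * g else 0)" for g
      unfolding c_def by (simp add: distrib_right)
    then show ?thesis by (simp add: sum.distrib)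
  qed
  also have "\<dots> = a + b"
  proof -
    have "(\<Sum>g\<in>t1 \<union> t2. (if g \<in> t1 then c1 g * g else 0)) = (\<Sum>g\<in>t1. c1 g * g)"
      using fin by (intro sum.mono_neutral_cong_right) auto
    moreover have "(\<Sum>g\<in>t1 \<union> t2. (if g \<in> t2 then c2 g * g else 0)) = (\<Sum>g\<in>t2. c2 g * g)"
      using fin by (intro sum.mono_neutral_cong_right) auto
    ultimately show ?thesis using 1(1) 2(1) by simp
  qed
  finally have "a + b = (\<Sum>g\<in>t1 \<union> t2. c g * g)" by simp
  moreover have "\<forall>g\<in>t1 \<union> t2. c g \<in> poly_ring r"
    using 1 2 unfolding c_def by (auto intro!: poly_ring_add poly_ring_zero)
  ultimately show ?thesis using fin 1 2 by (intro ideal_genI[of "t1 \<union> t2" G c]) auto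
qed

lemma ideal_mult:
  assumes "p \<in> poly_ring r" "a \<in> ideal_gen r G"
  shows "p * a \<in> ideal_gen r G"
proof -
  obtain t1 c1 where 1: "a = (\<Sum>g\<in>t1. c1 g * g)" "finite t1" "t1 \<subseteq> G" "\<forall>g\<in>t1. c1 g \<in> poly_ring r"
    using assms(2) unfolding ideal_gen_def by blast
  have "p * a = (\<Sum>g\<in>t1. (p * c1 g) * g)"
    unfolding 1(1) by (simp add: sum_distrib_left mult.assoc)
  moreover have "\<forall>g\<in>t1. p * c1 g \<in> poly_ring r" using 1 assms(1) poly_ring_mult by blast
  ultimately show ?thesis using 1 by (intro ideal_genI[of t1 G "\<lambda>g. p * c1 g"]) auto
qed

lemma ideal_uminus: "a \<in> ideal_gen r G \<Longrightarrow> - a \<in> ideal_gen r G"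
  using ideal_mult[OF poly_ring_uminus[OF poly_ring_one]] by fastforce

lemma ideal_diff: "a \<in> ideal_gen r G \<Longrightarrow> b \<in> ideal_gen r G \<Longrightarrow> a - b \<in> ideal_gen r G"
  using ideal_add[OF _ ideal_uminus] by (metis diff_conv_add_uminus)

lemma ideal_gen_mem: "g \<in> G \<Longrightarrow> g \<in> ideal_gen r G"
  unfolding ideal_gen_def
  by (rule CollectI, rule exI[of _ "{g}"], rule exI[of _ "\<lambda>_. 1"]) (auto simp: poly_ring_one)


definition md :: "(nat list \<Rightarrow>\<^sub>0 nat) \<Rightarrow> nat \<Rightarrow> nat \<Rightarrow> nat" where
  "md m l c = (\<Sum>x\<in>Poly_Mapping.keys m. if x ! l = c then Poly_Mapping.lookup m x else 0)"

definition sz :: "(nat list \<Rightarrow>\<^sub>0 nat) \<Rightarrow> nat" where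
  "sz m = (\<Sum>x\<in>Poly_Mapping.keys m. Poly_Mapping.lookup m x)"

lemma md_superset: "finite S \<Longrightarrow> Poly_Mapping.keys m \<subseteq> S \<Longrightarrow>
    md m l c = (\<Sum>x\<in>S. if x ! l = c then Poly_Mapping.lookup m x else 0)"
  unfolding md_def by (rule sum.mono_neutral_left) (auto simp: in_keys_iff)

lemma sz_superset: "finite S \<Longrightarrow> Poly_Mapping.keys m \<subseteq> S \<Longrightarrow> sz m = (\<Sum>x\<in>S. Poly_Mapping.lookup m x)"
  unfolding sz_def by (rule sum.mono_neutral_left) (auto simp: in_keys_iff)

lemma md_add: "md (m + n) = md m + md n"
proof (intro ext)
  fix l c
  let ?S = "Poly_Mapping.keys m \<union> Poly_Mapping.keys n"
  have "md (m + n) l c = (\<Sum>x\<in>?S. if x ! l = c then Poly_Mapping.lookup (m + n) x else 0)"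
    by (rule md_superset) (use keys_add[of m n] in auto)
  also have "\<dots> = (\<Sum>x\<in>?S. (if x ! l = c then Poly_Mapping.lookup m x else 0) + (if x ! l = c then Poly_Mapping.lookup n x else 0))"
    by (rule sum.cong) (auto simp: lookup_add)
  also have "\<dots> = md m l c + md n l c"
    by (simp add: sum.distrib md_superset[of ?S])
  finally show "md (m + n) l c = (md m + md n) l c" by simp
qed

lemma sz_add: "sz (m + n) = sz m + sz n"
proof -
  let ?S = "Poly_Mapping.keys m \<union> Poly_Mapping.keys n"
  have "sz (m + n) = (\<Sum>x\<in>?S. Poly_Mapping.lookup (m + n) x)"
    by (rule sz_superset) (use keys_add[of m n] in auto)
  also have "\<dots> = sz m + sz n"
    by (simp add: lookup_add sum.distrib sz_superset[of ?S])
  finally show ?thesis .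
qed

lemma md_single: "md (Poly_Mapping.single x k) l c = (if x ! l = c then k else 0)"
  using md_superset[of "{x}" "Poly_Mapping.single x k" l c] by simp

lemma sz_single: "sz (Poly_Mapping.single x k) = k"
  using sz_superset[of "{x}" "Poly_Mapping.single x k"] by simp

lemma md_zero: "md 0 = 0"
  by (simp add: md_def fun_eq_iff)

lemma md_ge: "x \<in> Poly_Mapping.keys m \<Longrightarrow> Poly_Mapping.lookup m x \<le> md m l (x ! l)"
proof -
  assume x: "x \<in> Poly_Mapping.keys m"
  have "(\<lambda>y. if y ! l = x ! l then Poly_Mapping.lookup m y else 0) x \<le> (\<Sum>y\<in>Poly_Mapping.keys m. if y ! l = x ! l then Poly_Mapping.lookup m y else 0)"
    by (rule member_le_sum) (use x in auto)
  then show ?thesis unfolding md_def by simp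
qed

lemma md_pos: "0 < md m l c \<Longrightarrow> \<exists>x\<in>Poly_Mapping.keys m. x ! l = c"
proof (rule ccontr)
  assume "0 < md m l c" "\<not> (\<exists>x\<in>Poly_Mapping.keys m. x ! l = c)"
  then have "md m l c = 0" unfolding md_def by (intro sum.neutral) auto
  then show False using \<open>0 < md m l c\<close> by simp
qed

lemma decomp: "k \<in> Poly_Mapping.keys (m :: nat list \<Rightarrow>\<^sub>0 nat) \<Longrightarrow> m = Poly_Mapping.single k 1 + (m - Poly_Mapping.single k 1)"
proof (rule poly_mapping_eqI)
  fix x assume k: "k \<in> Poly_Mapping.keys m"
  then have "Poly_Mapping.lookup m k \<noteq> 0" by (simp add: in_keys_iff)
  then show "Poly_Mapping.lookup m x = Poly_Mapping.lookup (Poly_Mapping.single k 1 + (m - Poly_Mapping.single k 1)) x"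
    by (cases "x = k") (simp_all add: lookup_add lookup_minus lookup_single when_def)
qed

lemma keys_minus_sub: "Poly_Mapping.keys (m - Poly_Mapping.single k (1::nat)) \<subseteq> Poly_Mapping.keys m"
  by (auto simp: lookup_minus in_keys_iff)

lemma swap_I2:
  assumes "a \<in> box r" "b \<in> box r" "p < length r"
  shows "(X (Poly_Mapping.single a 1 + Poly_Mapping.single b 1)
     - X (Poly_Mapping.single (a[p := b!p]) 1 + Poly_Mapping.single (b[p := a!p]) 1) :: 'k::comm_ring_1 mpoly) \<in> I2 r"
proof -
  have "Var a * Var b - Var (a[p := b!p]) * Var (b[p := a!p]) \<in> (minors2 r :: 'k mpoly set)"
    unfolding minors2_def using assms by blast
  moreover have "(Var x * Var y :: 'k mpoly) = X (Poly_Mapping.single x 1 + Poly_Mapping.single y 1)" for x y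
    by (simp add: Var_def mult_single)
  ultimately show ?thesis by (simp add: I2_def ideal_gen_mem)
qed

lemma eqv_mult:
  assumes "Poly_Mapping.keys u \<subseteq> box r" "(X m - X m' :: 'k::comm_ring_1 mpoly) \<in> I2 r"
  shows "(X (u + m) - X (u + m') :: 'k mpoly) \<in> I2 r"
proof -
  have "(X (u + m) - X (u + m') :: 'k mpoly) = X u * (X m - X m')"
    by (simp add: mult_single right_diff_distrib)
  then show ?thesis using ideal_mult[OF poly_ring_X[OF assms(1)]] assms(2) unfolding I2_def by simp
qed

lemma eqv_trans:
  "(a - b :: 'k::comm_ring_1 mpoly) \<in> I2 r \<Longrightarrow> b - c \<in> I2 r \<Longrightarrow> a - c \<in> I2 r"
  unfolding I2_def using ideal_add by fastforce

lemma eqv_sym: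
  "(a - b :: 'k::comm_ring_1 mpoly) \<in> I2 r \<Longrightarrow> b - a \<in> I2 r"
  unfolding I2_def using ideal_uminus by fastforce

lemma eqv_refl: "(a - a :: 'k::comm_ring_1 mpoly) \<in> I2 r"
  unfolding I2_def using ideal_zero by simp

lemma box_len: "a \<in> box r \<Longrightarrow> length a = length r"
  unfolding box_def by simp

lemma box_upd: "a \<in> box r \<Longrightarrow> b \<in> box r \<Longrightarrow> a[p := b!p] \<in> box r"
  unfolding box_def
proof (clarsimp)
  fix j assume "length a = length r" "\<forall>j<length r. Suc 0 \<le> a ! j \<and> a ! j \<le> r ! j"
    "length b = length r" "\<forall>j<length r. Suc 0 \<le> b ! j \<and> b ! j \<le> r ! j" "j < length r"
  then show "Suc 0 \<le> a[p := b ! p] ! j \<and> a[p := b ! p] ! j \<le> r ! j"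
    by (cases "j = p") (auto simp: nth_list_update)
qed


abbreviation S1 :: "nat list \<Rightarrow> (nat list \<Rightarrow>\<^sub>0 nat)" where
  "S1 a \<equiv> Poly_Mapping.single a 1"

lemma md_swap:
  assumes "length a = length b" "p < length a"
  shows "md (S1 a) + md (S1 b) = md (S1 (a[p := b!p])) + md (S1 (b[p := a!p]))"
proof (intro ext)
  fix l c
  show "(md (S1 a) + md (S1 b)) l c = (md (S1 (a[p := b!p])) + md (S1 (b[p := a!p]))) l c"
    using assms by (cases "l = p") (auto simp: md_single nth_list_update)
qed

lemma sort_lemma:
  assumes k: "k \<in> box r" and m': "Poly_Mapping.keys m' \<subseteq> box r"
    and pos: "\<forall>l<length r. 0 < md m' l (k ! l)" and r0: "0 < length r"
  shows "p \<le> length r \<Longrightarrow> \<exists>a m''. a \<in> box r \<and> Poly_Mapping.keys m'' \<subseteq> box r \<and>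
     (X m' - X (S1 a + m'') :: 'k::comm_ring_1 mpoly) \<in> I2 r \<and> md m' = md (S1 a + m'') \<and> (\<forall>l<p. a ! l = k ! l)"
proof (induction p)
  case 0
  have "0 < md m' 0 (k ! 0)" using pos r0 by blast
  then obtain a where a: "a \<in> Poly_Mapping.keys m'" using md_pos by blast
  show ?case
  proof (intro exI[of _ a] exI[of _ "m' - S1 a"] conjI)
    show "a \<in> box r" using a m' by blast
    show "Poly_Mapping.keys (m' - S1 a) \<subseteq> box r" using keys_minus_sub[of m' a] m' by blast
    have e: "S1 a + (m' - S1 a) = m'" using decomp[OF a] by (rule sym)
    show "(X m' - X (S1 a + (m' - S1 a)) :: 'k mpoly) \<in> I2 r" unfolding e by (rule eqv_refl)
    show "md m' = md (S1 a + (m' - S1 a))" unfolding e by (rule refl)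
  qed simp
next
  case (Suc p)
  have pl: "p < length r" using Suc.prems by simp
  then have "p \<le> length r" by simp
  then obtain a m'' where a: "a \<in> box r" "Poly_Mapping.keys m'' \<subseteq> box r"
     "(X m' - X (S1 a + m'') :: 'k mpoly) \<in> I2 r" "md m' = md (S1 a + m'')" "\<forall>l<p. a ! l = k ! l"
    using Suc.IH by blast
  show ?case
  proof (cases "a ! p = k ! p")
    case True
    then show ?thesis using a by (intro exI[of _ a] exI[of _ m'']) (auto simp: less_Suc_eq)
  next
    case False
    have "0 < md m' p (k ! p)" using pos pl by blast
    also have "md m' p (k ! p) = md m'' p (k ! p)" using a(4) False by (simp add: md_add md_single)
    finally obtain b where b: "b \<in> Poly_Mapping.keys m''" "b ! p = k ! p" using md_pos by blast
    define m3 where "m3 = m'' - S1 b"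
    have e: "m'' = S1 b + m3" unfolding m3_def using decomp[OF b(1)] .
    have m3: "Poly_Mapping.keys m3 \<subseteq> box r" using keys_minus_sub[of m'' b] a(2) unfolding m3_def by blast
    have bb: "b \<in> box r" using b a(2) by blast
    have la: "length a = length r" "length b = length r" using a(1) bb box_len by auto
    define a' where "a' = a[p := b!p]"
    define b' where "b' = b[p := a!p]"
    have sw: "(X (S1 a + S1 b) - X (S1 a' + S1 b') :: 'k mpoly) \<in> I2 r"
      unfolding a'_def b'_def using swap_I2[OF a(1) bb pl] .
    have sw2: "(X (m3 + (S1 a + S1 b)) - X (m3 + (S1 a' + S1 b')) :: 'k mpoly) \<in> I2 r"
      using eqv_mult[OF m3 sw] .
    have eq1: "S1 a + m'' = m3 + (S1 a + S1 b)" using e by (simp add: ac_simps)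
    have eq2: "S1 a' + (S1 b' + m3) = m3 + (S1 a' + S1 b')" by (simp add: ac_simps)
    show ?thesis
    proof (intro exI[of _ a'] exI[of _ "S1 b' + m3"] conjI)
      show "a' \<in> box r" unfolding a'_def using box_upd[OF a(1) bb] .
      have "b' \<in> box r" unfolding b'_def using box_upd[OF bb a(1)] .
      then show "Poly_Mapping.keys (S1 b' + m3) \<subseteq> box r" using m3 keys_add[of "S1 b'" m3] by auto
      show "(X m' - X (S1 a' + (S1 b' + m3)) :: 'k mpoly) \<in> I2 r"
      proof -
        have "(X m' - X (m3 + (S1 a + S1 b)) :: 'k mpoly) \<in> I2 r" using a(3) unfolding eq1 .
        from eqv_trans[OF this sw2] show ?thesis unfolding eq2 .
      qed
      have "md (S1 a + S1 b) = md (S1 a') + md (S1 b')"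
        unfolding a'_def b'_def using md_swap[of a b p] la pl by (simp add: md_add)
      moreover have "md m' = md m3 + md (S1 a + S1 b)" using a(4) unfolding eq1 by (simp only: md_add)
      moreover have "md (S1 a' + (S1 b' + m3)) = md m3 + (md (S1 a') + md (S1 b'))" unfolding eq2 by (simp only: md_add)
      ultimately show "md m' = md (S1 a' + (S1 b' + m3))" by simp
      show "\<forall>l<Suc p. a' ! l = k ! l"
        unfolding a'_def using a(5) b(2) la pl by (auto simp: nth_list_update less_Suc_eq)
    qed
  qed
qed

lemma comb_lemma:
  assumes "0 < length r"
  shows "Poly_Mapping.keys m \<subseteq> box r \<Longrightarrow> Poly_Mapping.keys m' \<subseteq> box r \<Longrightarrow> md m = md m' \<Longrightarrow>
    (X m - X m' :: 'k::comm_ring_1 mpoly) \<in> I2 r"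
proof (induction "sz m" arbitrary: m m' rule: less_induct)
  case less
  show ?case
  proof (cases "m = 0")
    case True
    have "m' = 0"
    proof (rule ccontr)
      assume "m' \<noteq> 0"
      then obtain x where x: "x \<in> Poly_Mapping.keys m'" by (metis keys_eq_empty ex_in_conv)
      then have "Poly_Mapping.lookup m' x \<le> md m' 0 (x ! 0)" by (rule md_ge)
      moreover have "md m' = 0" using less(4) True md_zero by simp
      ultimately show False using x by (simp add: in_keys_iff)
    qed
    then show ?thesis using True eqv_refl by simp
  next
    case False
    then obtain k where k: "k \<in> Poly_Mapping.keys m" by (metis keys_eq_empty ex_in_conv)
    have kb: "k \<in> box r" using k less(2) by blast
    have pos: "\<forall>l<length r. 0 < md m' l (k ! l)"
    proof (intro allI impI)
      fix l
      have "0 < Poly_Mapping.lookup m k" using k by (simp add: in_keys_iff)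
      also have "\<dots> \<le> md m l (k ! l)" using k by (rule md_ge)
      finally show "0 < md m' l (k ! l)" using less(4) by simp
    qed
    obtain a m'' where am: "a \<in> box r" "Poly_Mapping.keys m'' \<subseteq> box r"
     "(X m' - X (S1 a + m'') :: 'k mpoly) \<in> I2 r" "md m' = md (S1 a + m'')" "\<forall>l<length r. a ! l = k ! l"
      using sort_lemma[OF kb less(3) pos assms, of "length r"] by blast
    have "a = k" using am(5) box_len[OF am(1)] box_len[OF kb] by (intro nth_equalityI) auto
    define m0 where "m0 = m - S1 k"
    have e: "m = S1 k + m0" unfolding m0_def using decomp[OF k] .
    have m0: "Poly_Mapping.keys m0 \<subseteq> box r" using keys_minus_sub[of m k] less(2) unfolding m0_def by blast
    have "md (S1 k) + md m0 = md (S1 k) + md m''"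
      using less(4) am(4) e \<open>a = k\<close> by (simp add: md_add)
    then have mdeq: "md m0 = md m''" by simp
    have "sz m0 < sz m" using e by (simp add: sz_add sz_single)
    then have ih: "(X m0 - X m'' :: 'k mpoly) \<in> I2 r" using less(1)[OF _ m0 am(2) mdeq] by blast
    have "(X (S1 k + m0) - X (S1 k + m'') :: 'k mpoly) \<in> I2 r"
      using eqv_mult[OF _ ih] kb by simp
    then have "(X m - X (S1 a + m'') :: 'k mpoly) \<in> I2 r" using e \<open>a = k\<close> by simp
    from eqv_trans[OF this eqv_sym[OF am(3)]] show ?thesis .
  qed
qed


definition L :: "(nat \<Rightarrow> nat \<Rightarrow> nat) \<Rightarrow> 'k::comm_ring_1 mpoly \<Rightarrow> 'k" where
  "L d G = (\<Sum>m\<in>Poly_Mapping.keys G. if md m = d then Poly_Mapping.lookup G m else 0)"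

lemma L_superset: "finite S \<Longrightarrow> Poly_Mapping.keys G \<subseteq> S \<Longrightarrow>
    L d G = (\<Sum>m\<in>S. if md m = d then Poly_Mapping.lookup G m else 0)"
  unfolding L_def by (rule sum.mono_neutral_left) (auto simp: in_keys_iff)

lemma L_add: "L d (G + H) = L d G + L d H"
proof -
  let ?S = "Poly_Mapping.keys G \<union> Poly_Mapping.keys H"
  have "L d (G + H) = (\<Sum>m\<in>?S. if md m = d then Poly_Mapping.lookup (G + H) m else 0)"
    by (rule L_superset) (use keys_add[of G H] in auto)
  also have "\<dots> = (\<Sum>m\<in>?S. (if md m = d then Poly_Mapping.lookup G m else 0) + (if md m = d then Poly_Mapping.lookup H m else 0))"
    by (rule sum.cong) (auto simp: lookup_add)
  also have "\<dots> = L d G + L d H"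
    by (simp add: sum.distrib L_superset[of ?S])
  finally show ?thesis .
qed

lemma L_zero: "L d 0 = 0"
  by (simp add: L_def)

lemma L_uminus: "L d (- G) = - L d G"
  unfolding L_def by (simp add: sum_negf[symmetric] if_distrib cong: if_cong)

lemma L_diff: "L d (G - H) = L d G - L d H"
  using L_add[of d G "- H"] L_uminus[of d H] by simp

lemma L_sum: "finite A \<Longrightarrow> L d (sum f A) = (\<Sum>x\<in>A. L d (f x))"
  by (induction A rule: finite_induct) (simp_all add: L_zero L_add)

lemma L_single: "L d (Poly_Mapping.single m a) = (if md m = d then a else 0)"
  using L_superset[of "{m}" "Poly_Mapping.single m a" d] by simp

lemma expand: "G = (\<Sum>m\<in>Poly_Mapping.keys G. Poly_Mapping.single m (Poly_Mapping.lookup G m))"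
proof (rule poly_mapping_eqI)
  fix x
  have "Poly_Mapping.lookup (\<Sum>m\<in>Poly_Mapping.keys G. Poly_Mapping.single m (Poly_Mapping.lookup G m)) x
      = (\<Sum>m\<in>Poly_Mapping.keys G. if m = x then Poly_Mapping.lookup G m else 0)"
    by (simp add: lookup_sum lookup_single when_def)
  also have "\<dots> = Poly_Mapping.lookup G x"
    by (simp add: sum.delta in_keys_iff)
  finally show "Poly_Mapping.lookup G x = Poly_Mapping.lookup (\<Sum>m\<in>Poly_Mapping.keys G. Poly_Mapping.single m (Poly_Mapping.lookup G m)) x"
    by simp
qed

lemma X_mult: "(X u :: 'k::comm_ring_1 mpoly) * G = (\<Sum>m\<in>Poly_Mapping.keys G. Poly_Mapping.single (u + m) (Poly_Mapping.lookup G m))"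
proof -
  have "(X u :: 'k mpoly) * G = X u * (\<Sum>m\<in>Poly_Mapping.keys G. Poly_Mapping.single m (Poly_Mapping.lookup G m))"
    by (subst expand[of G]) (rule refl)
  also have "\<dots> = (\<Sum>m\<in>Poly_Mapping.keys G. Poly_Mapping.single (u + m) (Poly_Mapping.lookup G m))"
    by (simp add: sum_distrib_left mult_single)
  finally show ?thesis .
qed

lemma L_Xmult: "L d ((X u :: 'k::comm_ring_1 mpoly) * G) =
    (\<Sum>m\<in>Poly_Mapping.keys G. if md u + md m = d then Poly_Mapping.lookup G m else 0)"
  by (simp add: X_mult L_sum L_single md_add)

lemma L_shift: "L (e + md u) ((X u :: 'k::comm_ring_1 mpoly) * G) = L e G"
proof -
  have "md u + md m = e + md u \<longleftrightarrow> md m = e" for m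
    by (metis add.commute add_left_cancel)
  moreover have "L (e + md u) ((X u :: 'k mpoly) * G) =
    (\<Sum>m\<in>Poly_Mapping.keys G. if md u + md m = e + md u then Poly_Mapping.lookup G m else 0)"
    by (rule L_Xmult)
  ultimately show ?thesis unfolding L_def[of e G] by simp
qed

lemma L_I2: "(G :: 'k::comm_ring_1 mpoly) \<in> I2 r \<Longrightarrow> L d G = 0"
proof -
  assume "G \<in> I2 r"
  then obtain t c where t: "G = (\<Sum>g\<in>t. c g * g)" "finite t" "t \<subseteq> minors2 r"
    unfolding I2_def ideal_gen_def by blast
  have "L d (c g * g) = 0" if g: "g \<in> minors2 r" for g
  proof -
    obtain a b p where abp: "a \<in> box r" "b \<in> box r" "p < length r"
      "g = Var a * Var b - Var (a[p := b!p]) * Var (b[p := a!p])"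
      using g unfolding minors2_def by blast
    have V: "(Var x * Var y :: 'k mpoly) = X (S1 x + S1 y)" for x y
      by (simp add: Var_def mult_single)
    have la: "length a = length b" "p < length a" using abp box_len by auto
    have mdeq: "md (S1 a + S1 b) = md (S1 (a[p := b!p]) + S1 (b[p := a!p]))"
      using md_swap[OF la] by (simp add: md_add)
    have "c g * g = X (S1 a + S1 b) * c g - X (S1 (a[p := b!p]) + S1 (b[p := a!p])) * c g"
      unfolding abp(4) V by (simp add: algebra_simps)
    then have "L d (c g * g) = L d (X (S1 a + S1 b) * c g) - L d (X (S1 (a[p := b!p]) + S1 (b[p := a!p])) * c g)"
      by (simp only: L_diff)
    also have "\<dots> = 0" unfolding L_Xmult mdeq by simp
    finally show ?thesis .
  qed
  then show "L d G = 0" using t by (simp add: L_sum subsetD)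
qed

lemma ideal_sum: "finite A \<Longrightarrow> (\<forall>x\<in>A. f x \<in> ideal_gen r G) \<Longrightarrow> sum f A \<in> ideal_gen r G"
  by (induction A rule: finite_induct) (simp_all add: ideal_zero ideal_add)

lemma Var_pow: "\<exists>u. (Var i :: 'k::comm_ring_1 mpoly) ^ n = X u"
proof (induction n)
  case 0
  then show ?case by (intro exI[of _ 0]) simp
next
  case (Suc n)
  then obtain u where "(Var i :: 'k mpoly) ^ n = X u" by blast
  then show ?case by (intro exI[of _ "S1 i + u"]) (simp add: Var_def mult_single)
qed

lemma L_vanish_I2:
  assumes r0: "0 < length r" and F: "F \<in> poly_ring r" and L0: "\<And>e. L e F = 0"
  shows "(F :: 'k::comm_ring_1 mpoly) \<in> I2 r"
proof -
  define rep where "rep m = (SOME m'. m' \<in> Poly_Mapping.keys F \<and> md m' = md m)" for m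
  have rep: "rep m \<in> Poly_Mapping.keys F \<and> md (rep m) = md m" if "m \<in> Poly_Mapping.keys F" for m
    unfolding rep_def by (rule someI[of _ m]) (use that in simp)
  have kb: "Poly_Mapping.keys m \<subseteq> box r" if "m \<in> Poly_Mapping.keys F" for m
    using F that unfolding poly_ring_def by blast
  define a where "a m = (Poly_Mapping.single 0 (Poly_Mapping.lookup F m) :: 'k mpoly)" for m
  have D: "(\<Sum>m\<in>Poly_Mapping.keys F. a m * (X m - X (rep m))) \<in> I2 r"
    unfolding I2_def
  proof (rule ideal_sum, simp, intro ballI)
    fix m assume m: "m \<in> Poly_Mapping.keys F"
    have "(X m - X (rep m) :: 'k mpoly) \<in> I2 r"
      using comb_lemma[OF r0 kb[OF m] kb] rep[OF m] m by metis
    then show "a m * (X m - X (rep m)) \<in> ideal_gen r (minors2 r)"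
      unfolding I2_def a_def by (rule ideal_mult[OF poly_ring_const])
  qed
  have R: "(\<Sum>m\<in>Poly_Mapping.keys F. a m * X (rep m)) = 0"
  proof (rule poly_mapping_eqI)
    fix x
    have "Poly_Mapping.lookup (\<Sum>m\<in>Poly_Mapping.keys F. a m * X (rep m)) x
        = (\<Sum>m\<in>Poly_Mapping.keys F. if rep m = x then Poly_Mapping.lookup F m else 0)"
      by (simp add: a_def mult_single lookup_sum lookup_single when_def)
    also have "\<dots> = 0"
    proof (cases "\<exists>m1\<in>Poly_Mapping.keys F. rep m1 = x")
      case True
      then obtain m1 where m1: "m1 \<in> Poly_Mapping.keys F" "rep m1 = x" by blast
      have "(\<Sum>m\<in>Poly_Mapping.keys F. if rep m = x then Poly_Mapping.lookup F m else 0)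
          = (\<Sum>m\<in>Poly_Mapping.keys F. if md m = md m1 then Poly_Mapping.lookup F m else 0)"
      proof (rule sum.cong)
        fix m assume m: "m \<in> Poly_Mapping.keys F"
        have "rep m = x \<longleftrightarrow> md m = md m1"
        proof
          assume "rep m = x"
          then show "md m = md m1" using rep[OF m] rep[OF m1(1)] m1(2) by simp
        next
          assume "md m = md m1"
          then have "rep m = rep m1" unfolding rep_def by simp
          then show "rep m = x" using m1(2) by simp
        qed
        then show "(if rep m = x then Poly_Mapping.lookup F m else 0) = (if md m = md m1 then Poly_Mapping.lookup F m else 0)"
          by simp
      qed simp
      also have "\<dots> = L (md m1) F" unfolding L_def ..
      finally show ?thesis using L0 by simp
    next
      case False
      then show ?thesis by (intro sum.neutral) auto
    qed
    finally show "Poly_Mapping.lookup (\<Sum>m\<in>Poly_Mapping.keys F. a m * X (rep m)) x = Poly_Mapping.lookup 0 x"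
      by simp
  qed
  have "F = (\<Sum>m\<in>Poly_Mapping.keys F. a m * X m)"
    by (subst expand[of F]) (simp add: a_def mult_single)
  also have "\<dots> = (\<Sum>m\<in>Poly_Mapping.keys F. a m * (X m - X (rep m))) + (\<Sum>m\<in>Poly_Mapping.keys F. a m * X (rep m))"
    by (simp add: sum.distrib[symmetric] algebra_simps)
  also have "\<dots> = (\<Sum>m\<in>Poly_Mapping.keys F. a m * (X m - X (rep m)))" using R by simp
  finally show ?thesis using D by simp
qed

theorem lemma1p2:
  fixes r :: "nat list" and F :: "'k::field mpoly" and i :: "nat list"
  assumes "length r \<ge> 2"
    and "F \<in> poly_ring r"
    and "i \<in> box r"
    and "lam > (0::nat)" and "Var i ^ lam * F \<in> I2 r"
  shows "\<forall>j \<in> box r. \<exists>nu::nat. Var j ^ nu * F \<in> I2 r"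
proof -
  obtain u where u: "(Var i :: 'k mpoly) ^ lam = X u" using Var_pow by blast
  have "L e F = 0" for e
  proof -
    have "L e F = L (e + md u) (X u * F)" by (rule L_shift[symmetric])
    also have "\<dots> = 0" using assms(5) u L_I2 by metis
    finally show ?thesis .
  qed
  moreover have "0 < length r" using assms(1) by linarith
  ultimately have "F \<in> I2 r" using L_vanish_I2[of r F] assms(2) by blast
  then show ?thesis by (intro ballI exI[of _ 0]) simp
qed

end
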